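(* Let $C\in\mathcal{P}(n,d)$ with $\mathrm{st}(C)=\{j_1<\cdots<j_\ell\}$. Then $\ell\le d\le n-\ell$ and $j_k\ge 2k$ for all $1\le k\le\ell$.
   Context: $\mathcal{P}(n,d)$ is the set of words $C=C_1\cdots C_n$ in letters $\mathbf{e}$ (east step) and $\mathbf{n}$ (north step) with exactly $d$ letters $\mathbf{e}$. Scan positions left to right and mark position $i$ with $C_i=\mathbf{e}$ if the number of $j<i$ with $C_j=\mathbf{n}$ equals the number of $j<i$ with $C_j=\mathbf{e}$ that are unmarked; $\mathrm{st}(C)$ is the set of unmarked positions $i$ with $C_i=\mathbf{e}$. *)

theory Defs
  imports Main
begin

datatype step = E | N   (* E = east step, N = north step *)

text \<open>Scanning left to right; a = number of N letters seen so far,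
  b = number of unmarked E letters seen so far.\<close>
fun marks_aux :: "nat \<Rightarrow> nat \<Rightarrow> step list \<Rightarrow> bool list" where
  "marks_aux a b [] = []"
| "marks_aux a b (N # w) = False # marks_aux (Suc a) b w"
| "marks_aux a b (E # w) =
     (if a = b then True # marks_aux a b w else False # marks_aux a (Suc b) w)"

definition marks :: "step list \<Rightarrow> bool list" where
  "marks C = marks_aux 0 0 C"

definition P :: "nat \<Rightarrow> nat \<Rightarrow> step list set" where
  "P n d = {C. length C = n \<and> length (filter (\<lambda>x. x = E) C) = d}"

text \<open>Positions are 1-indexed: position i corresponds to C ! (i - 1).\<close>
definition st :: "step list \<Rightarrow> nat set" where
  "st C = {i. 1 \<le> i \<and> i \<le> length C \<and> C ! (i - 1) = E \<and> \<not> marks C ! (i - 1)}"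

end

theory Submission
  imports Defs
begin

lemma card_Suc_split:
  "card {i. i < Suc j \<and> Q i} = (if Q 0 then 1 else 0) + card {i. i < j \<and> Q (Suc i)}"
proof -
  have eq: "{i. i < Suc j \<and> Q i} = (if Q 0 then {0} else {}) \<union> Suc ` {i. i < j \<and> Q (Suc i)}"
    by (auto simp: image_iff less_Suc_eq_0_disj)
  have "card (Suc ` {i. i < j \<and> Q (Suc i)}) = card {i. i < j \<and> Q (Suc i)}"
    by (simp add: card_image)
  then show ?thesis unfolding eq by (auto simp: card_insert_if)
qed

lemma len_marks_aux[simp]: "length (marks_aux a b w) = length w"
  by (induction a b w rule: marks_aux.induct) auto

lemma key:
  "b \<le> a \<Longrightarrow> j < length w \<Longrightarrow> w ! j = E \<Longrightarrow> \<not> marks_aux a b w ! j \<Longrightarrow>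
   b + card {i. i < j \<and> w ! i = E \<and> \<not> marks_aux a b w ! i}
     < a + length (filter (\<lambda>x. x = N) (take j w))"
proof (induction w arbitrary: a b j)
  case Nil then show ?case by simp
next
  case (Cons x w)
  show ?case
  proof (cases j)
    case 0
    then show ?thesis using Cons.prems by (cases x) (auto split: if_splits)
  next
    case (Suc j')
    show ?thesis
    proof (cases x)
      case N
      have "Suc a \<ge> b" using Cons.prems by simp
      from Cons.IH[OF this, of j'] Cons.prems show ?thesis using N Suc
        by (simp add: card_Suc_split del: mem_Collect_eq)
    next
      case E
      show ?thesis
      proof (cases "a = b")
        case True
        from Cons.IH[of b a j'] Cons.prems show ?thesis using E Suc True
          by (simp add: card_Suc_split)
      next
        case False
        have "Suc b \<le> a" using Cons.prems False by simp
        from Cons.IH[OF this, of j'] Cons.prems show ?thesis using E Suc False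
          by (simp add: card_Suc_split)
      qed
    qed
  qed
qed

lemma total:
  "b \<le> a \<Longrightarrow>
   b + card {i. i < length w \<and> w ! i = E \<and> \<not> marks_aux a b w ! i}
     \<le> a + length (filter (\<lambda>x. x = N) w)"
proof (induction w arbitrary: a b)
  case Nil then show ?case by simp
next
  case (Cons x w)
  show ?case
  proof (cases x)
    case N
    have "Suc a \<ge> b" using Cons.prems by simp
    from Cons.IH[OF this] show ?thesis using N
      by (simp add: card_Suc_split del: mem_Collect_eq)
  next
    case E
    show ?thesis
    proof (cases "a = b")
      case True
      from Cons.IH[of b a] Cons.prems show ?thesis using E True
        by (simp add: card_Suc_split)
    next
      case False
      have "Suc b \<le> a" using Cons.prems False by simp
      from Cons.IH[OF this] Cons.prems show ?thesis using E False
        by (simp add: card_Suc_split)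
    qed
  qed
qed

lemma st_eq: "st C = Suc ` {i. i < length C \<and> C ! i = E \<and> \<not> marks C ! i}"
proof
  show "st C \<subseteq> Suc ` {i. i < length C \<and> C ! i = E \<and> \<not> marks C ! i}"
  proof
    fix x assume x: "x \<in> st C"
    hence "x = Suc (x - 1)" "x - 1 \<in> {i. i < length C \<and> C ! i = E \<and> \<not> marks C ! i}"
      unfolding st_def by auto
    thus "x \<in> Suc ` {i. i < length C \<and> C ! i = E \<and> \<not> marks C ! i}" by (rule image_eqI)
  qed
  show "Suc ` {i. i < length C \<and> C ! i = E \<and> \<not> marks C ! i} \<subseteq> st C"
    unfolding st_def by auto
qed

lemma countN: "length (filter (\<lambda>x. x = N) C) = length C - length (filter (\<lambda>x. x = E) C)"
proof -
  have "filter (\<lambda>x. \<not> x = E) C = filter (\<lambda>x. x = N) C"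
    proof (rule filter_cong)
    fix x :: step show "(\<not> x = E) = (x = N)" by (cases x) auto
  qed simp
  moreover have "length (filter (\<lambda>x. x = E) C) + length (filter (\<lambda>x. \<not> x = E) C) = length C"
    by (rule sum_length_filter_compl)
  ultimately show ?thesis by simp
qed

lemma pos_bound:
  assumes "j \<in> st C"
  shows "2 * card {x \<in> st C. x \<le> j} \<le> j"
proof -
  define U where "U = {i. i < length C \<and> C ! i = E \<and> \<not> marks C ! i}"
  obtain j0 where j0: "j = Suc j0" "j0 \<in> U" using assms st_eq U_def by auto
  have "{x \<in> st C. x \<le> j} = Suc ` {i \<in> U. i \<le> j0}"
    using j0 by (auto simp: st_eq U_def[symmetric])
  hence c1: "card {x \<in> st C. x \<le> j} = card {i \<in> U. i \<le> j0}"
    by (simp add: card_image)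
  have "{i \<in> U. i \<le> j0} = insert j0 {i. i < j0 \<and> C ! i = E \<and> \<not> marks C ! i}"
    using j0 by (auto simp: U_def)
  hence c2: "card {i \<in> U. i \<le> j0} = Suc (card {i. i < j0 \<and> C ! i = E \<and> \<not> marks C ! i})"
    by simp
  have jl: "j0 < length C" "C ! j0 = E" "\<not> marks C ! j0" using j0 U_def by auto
  have k: "card {i. i < j0 \<and> C ! i = E \<and> \<not> marks C ! i}
     < length (filter (\<lambda>x. x = N) (take j0 C))"
    using key[of 0 0 j0 C] jl unfolding marks_def by simp
  have ln: "length (filter (\<lambda>x. x = N) (take j0 C)) = card {i. i < j0 \<and> C ! i = N}"
    using jl(1) by (simp add: length_filter_conv_card cong: conj_cong)
  have "card {i. i < j0 \<and> C ! i = E \<and> \<not> marks C ! i} + card {i. i < j0 \<and> C ! i = N}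
     = card ({i. i < j0 \<and> C ! i = E \<and> \<not> marks C ! i} \<union> {i. i < j0 \<and> C ! i = N})"
    by (rule card_Un_disjoint[symmetric]) auto
  also have "\<dots> \<le> card {..<j0}" by (rule card_mono) auto
  finally have "card {i. i < j0 \<and> C ! i = E \<and> \<not> marks C ! i} + card {i. i < j0 \<and> C ! i = N} \<le> j0"
    by simp
  then show ?thesis using c1 c2 k ln j0 by simp
qed

theorem lemma4p12:
  fixes C :: "step list" and n d :: nat
  assumes "C \<in> P n d"
  shows "card (st C) \<le> d \<and> d \<le> n - card (st C) \<and>
         (\<forall>k. 1 \<le> k \<and> k \<le> card (st C) \<longrightarrow>
              2 * k \<le> sorted_list_of_set (st C) ! (k - 1))"
proof -
  define U where "U = {i. i < length C \<and> C ! i = E \<and> \<not> marks C ! i}"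
  have cs: "card (st C) = card U" unfolding st_eq U_def[symmetric] by (simp add: card_image)
  have ln: "length C = n" and ld: "length (filter (\<lambda>x. x = E) C) = d" using assms by (auto simp: P_def)
  have "card U \<le> card {i. i < length C \<and> C ! i = E}" unfolding U_def by (rule card_mono) auto
  hence A: "card (st C) \<le> d" using cs ld by (simp add: length_filter_conv_card)
  have "card U \<le> length (filter (\<lambda>x. x = N) C)"
    using total[of 0 0 C] unfolding U_def marks_def by simp
  moreover have "d \<le> n" using ln ld length_filter_le[of "\<lambda>x. x = E" C] by simp
  ultimately have B: "d \<le> n - card (st C)" using cs countN[of C] ln ld A
    by simp
  have fin: "finite (st C)" unfolding st_def by auto
  have Cc: "2 * k \<le> sorted_list_of_set (st C) ! (k - 1)" if k: "1 \<le> k" "k \<le> card (st C)" for k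
  proof -
    define s where "s = sorted_list_of_set (st C)"
    have ls: "length s = card (st C)" and ds: "distinct s" and ss: "sorted s" and sset: "set s = st C"
      using fin by (auto simp: s_def)
    have km: "k - 1 < length s" using k ls by simp
    have jin: "s ! (k - 1) \<in> st C" using km sset nth_mem by blast
    have sub: "(\<lambda>i. s ! i) ` {..<k} \<subseteq> {x \<in> st C. x \<le> s ! (k - 1)}"
    proof
      fix y assume "y \<in> (\<lambda>i. s ! i) ` {..<k}"
      then obtain i where i: "i < k" "y = s ! i" by auto
      have "i < length s" using i km by simp
      hence "y \<in> st C" using i sset nth_mem by blast
      moreover have "y \<le> s ! (k - 1)" using i ss km by (simp add: sorted_nth_mono)
      ultimately show "y \<in> {x \<in> st C. x \<le> s ! (k - 1)}" by simp
    qed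
    have "inj_on (\<lambda>i. s ! i) {..<k}" using ds km
      by (auto simp: inj_on_def nth_eq_iff_index_eq)
    hence "k = card ((\<lambda>i. s ! i) ` {..<k})" by (simp add: card_image)
    also have "\<dots> \<le> card {x \<in> st C. x \<le> s ! (k - 1)}" using sub fin by (intro card_mono) auto
    finally have "2 * k \<le> 2 * card {x \<in> st C. x \<le> s ! (k - 1)}" by simp
    also have "\<dots> \<le> s ! (k - 1)" using pos_bound[OF jin] .
    finally show ?thesis unfolding s_def .
  qed
  show ?thesis using A B Cc by blast
qed

end
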